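(* Let $(y_1,z_1)$ be a nontrivial solution of $$\ddot y_1+3y_1+\tfrac32y_1^3+\tfrac92y_1z_1^2=0,\qquad \ddot z_1+9z_1+\tfrac92z_1^3+\tfrac{27}{2}z_1y_1^2=0.$$ Let $t_1<t_2$ be two consecutive critical points of $y_1(t)$. Then there exists $\tau\in(t_1,t_2)$ such that $z_1(\tau)=0$. *)

theory Defs
  imports "HOL-Analysis.Analysis"
begin

end

theory Submission
  imports Defs
begin

lemma ivt_zero:
  fixes f :: "real \<Rightarrow> real"
  assumes "continuous_on {p..q} f" "p \<le> q" "f p * f q \<le> 0"
  shows "\<exists>x\<in>{p..q}. f x = 0"
proof -
  have "(f p \<le> 0 \<and> 0 \<le> f q) \<or> (f q \<le> 0 \<and> 0 \<le> f p)"
    using assms(3) by (auto simp: mult_le_0_iff)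
  then show ?thesis
  proof
    assume "f p \<le> 0 \<and> 0 \<le> f q"
    then show ?thesis using IVT'[of f p 0 q] assms by auto
  next
    assume "f q \<le> 0 \<and> 0 \<le> f p"
    then show ?thesis using IVT2'[of f q 0 p] assms by auto
  qed
qed

lemma const_sign:
  fixes f :: "real \<Rightarrow> real"
  assumes "continuous_on UNIV f" "\<forall>x\<in>{a<..<b}. f x \<noteq> 0"
    "s \<in> {a<..<b}" "t \<in> {a<..<b}"
  shows "f s * f t > 0"
proof (rule ccontr)
  assume h: "\<not> f s * f t > 0"
  have c: "continuous_on {min s t..max s t} f"
    using assms(1) continuous_on_subset by blast
  have pr: "f (min s t) * f (max s t) \<le> 0"
    using h by (cases "s \<le> t") (auto simp: mult.commute min_def max_def)
  have le: "min s t \<le> max s t" by simp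
  obtain x where "x \<in> {min s t..max s t}" "f x = 0"
    using ivt_zero[OF c le pr] by blast
  moreover have "{min s t..max s t} \<subseteq> {a<..<b}" using assms(3,4) by auto
  ultimately show False using assms(2) by auto
qed

lemma endpoint_sign:
  fixes f :: "real \<Rightarrow> real"
  assumes "continuous_on UNIV f" "\<forall>x\<in>{a<..<b}. f x \<noteq> 0"
    "m \<in> {a<..<b}"
  shows "f a * f m \<ge> 0" "f b * f m \<ge> 0"
proof -
  have ab: "a < b" using assms(3) by auto
  show "f a * f m \<ge> 0"
  proof (rule ccontr)
    assume h: "\<not> f a * f m \<ge> 0"
    have c: "continuous_on {a..m} f"
      using assms(1) continuous_on_subset by blast
    obtain x where x: "x \<in> {a..m}" "f x = 0"
      using ivt_zero[OF c] h assms(3) by auto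
    have "x \<noteq> a" "x \<noteq> m" using x h by auto
    then show False using x assms by auto
  qed
  show "f b * f m \<ge> 0"
  proof (rule ccontr)
    assume h: "\<not> f b * f m \<ge> 0"
    have c: "continuous_on {m..b} f"
      using assms(1) continuous_on_subset by blast
    obtain x where x: "x \<in> {m..b}" "f x = 0"
      using ivt_zero[OF c] h assms(3) by (auto simp: mult.commute)
    have "x \<noteq> b" "x \<noteq> m" using x h by auto
    then show False using x assms by auto
  qed
qed

theorem proposition4p2:
  fixes y z y' z' y'' z'' :: "real \<Rightarrow> real" and t1 t2 :: real
  assumes dy: "\<And>t. (y has_real_derivative y' t) (at t)"
      and dy': "\<And>t. (y' has_real_derivative y'' t) (at t)"
      and dz: "\<And>t. (z has_real_derivative z' t) (at t)"
      and dz': "\<And>t. (z' has_real_derivative z'' t) (at t)"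
      and ode_y: "\<And>t. y'' t + 3 * y t + 3/2 * (y t)^3 + 9/2 * y t * (z t)^2 = 0"
      and ode_z: "\<And>t. z'' t + 9 * z t + 9/2 * (z t)^3 + 27/2 * z t * (y t)^2 = 0"
      and nontrivial: "\<exists>t. y t \<noteq> 0 \<or> z t \<noteq> 0"
      and t12: "t1 < t2"
      and crit1: "y' t1 = 0" and crit2: "y' t2 = 0"
      and consecutive: "\<forall>t\<in>{t1<..<t2}. y' t \<noteq> 0"
  shows "\<exists>\<tau>\<in>{t1<..<t2}. z \<tau> = 0"
proof (rule ccontr)
  assume "\<not> ?thesis"
  then have zne: "\<forall>t\<in>{t1<..<t2}. z t \<noteq> 0" by auto
  define m where "m = (t1 + t2) / 2"
  have m: "m \<in> {t1<..<t2}" using t12 by (auto simp: m_def)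
  define a where "a = y' m"
  define b where "b = z m"
  have cy': "continuous_on UNIV y'"
    by (metis DERIV_isCont continuous_at_imp_continuous_on dy')
  have cz: "continuous_on UNIV z"
    by (metis DERIV_isCont continuous_at_imp_continuous_on dz)
  have ya: "\<And>t. t \<in> {t1<..<t2} \<Longrightarrow> y' t * a > 0"
    using const_sign[OF cy' consecutive _ m] by (simp add: a_def)
  have zb: "\<And>t. t \<in> {t1<..<t2} \<Longrightarrow> z t * b > 0"
    using const_sign[OF cz zne _ m] by (simp add: b_def)
  have zb1: "z t1 * b \<ge> 0" and zb2: "z t2 * b \<ge> 0"
    using endpoint_sign[OF cz zne m] by (auto simp: b_def)
  define P where "P = (\<lambda>t. 3 + 3/2 * (y t)^2 + 9/2 * (z t)^2)"
  have Ppos: "P t > 0" for t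
    unfolding P_def using zero_le_power2[of "y t"] zero_le_power2[of "z t"] by linarith
  have y''eq: "y'' t = - y t * P t" for t
    using ode_y[of t] unfolding P_def by (simp add: algebra_simps power2_eq_square power3_eq_cube)
  have g1: "a * y'' t1 \<ge> 0"
  proof (rule ccontr)
    assume "\<not> ?thesis"
    then have "a * y'' t1 < 0" by simp
    moreover have "((\<lambda>t. a * y' t) has_real_derivative a * y'' t1) (at t1)"
      by (rule DERIV_cmult[OF dy'])
    ultimately obtain d where d: "d > 0" "\<forall>h>0. h < d \<longrightarrow> a * y' t1 > a * y' (t1 + h)"
      using DERIV_neg_dec_right by blast
    define M where "M = min d (t2 - t1)"
    define h where "h = M / 2"
    have "M \<le> d" "M \<le> t2 - t1" "M > 0" using d t12 unfolding M_def by auto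
    then have hb: "h > 0" "h < d" "h < t2 - t1" unfolding h_def by linarith+
    then have "h > 0" "h < d" "t1 + h \<in> {t1<..<t2}" by auto
    then have p: "y' (t1+h) * a > 0" using ya by blast
    have "a * y' (t1 + h) < 0" using d(2) hb crit1 by simp
    then show False using p by (simp add: mult.commute)
  qed
  have g2: "a * y'' t2 \<le> 0"
  proof (rule ccontr)
    assume "\<not> ?thesis"
    then have "a * y'' t2 > 0" by simp
    moreover have "((\<lambda>t. a * y' t) has_real_derivative a * y'' t2) (at t2)"
      by (rule DERIV_cmult[OF dy'])
    ultimately obtain d where d: "d > 0" "\<forall>h>0. h < d \<longrightarrow> a * y' (t2 - h) < a * y' t2"
      using DERIV_pos_inc_left by blast
    define M where "M = min d (t2 - t1)"
    define h where "h = M / 2"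
    have "M \<le> d" "M \<le> t2 - t1" "M > 0" using d t12 unfolding M_def by auto
    then have hb: "h > 0" "h < d" "h < t2 - t1" unfolding h_def by linarith+
    then have "h > 0" "h < d" "t2 - h \<in> {t1<..<t2}" by auto
    then have p: "y' (t2-h) * a > 0" using ya by blast
    have "a * y' (t2 - h) < 0" using d(2) hb crit2 by simp
    then show False using p by (simp add: mult.commute)
  qed
  have ay1: "a * y t1 \<le> 0"
  proof -
    have "a * y'' t1 = - ((a * y t1) * P t1)" using y''eq[of t1] by (simp add: algebra_simps)
    then have "(a * y t1) * P t1 \<le> 0" using g1 by linarith
    then show ?thesis using Ppos[of t1] by (simp add: mult_le_0_iff)
  qed
  have ay2: "a * y t2 \<ge> 0"
  proof -
    have "a * y'' t2 = - ((a * y t2) * P t2)" using y''eq[of t2] by (simp add: algebra_simps)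
    then have "(a * y t2) * P t2 \<ge> 0" using g2 by linarith
    then show ?thesis using Ppos[of t2] by (simp add: zero_le_mult_iff)
  qed
  define V where "V = (\<lambda>t. y' t * z' t + 3 * y t * z t + 3/2 * (y t)^3 * z t + 3/2 * y t * (z t)^3)"
  define V' where "V' = (\<lambda>t. - y' t * z t * (6 + 9 * (y t)^2 + 3 * (z t)^2))"
  have dV: "(V has_real_derivative V' t) (at t)" for t
  proof -
    have "(V has_real_derivative
       (y'' t * z' t + y' t * z'' t + 3 * (y' t * z t + y t * z' t)
        + 3/2 * (3 * (y t)^2 * y' t * z t + (y t)^3 * z' t)
        + 3/2 * (y' t * (z t)^3 + y t * (3 * (z t)^2 * z' t)))) (at t)"
      unfolding V_def
      apply (auto intro!: derivative_eq_intros dy dy' dz dz' simp: algebra_simps power2_eq_square power3_eq_cube)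
      apply (simp add: field_simps)
      done
    moreover have "y'' t * z' t + y' t * z'' t + 3 * (y' t * z t + y t * z' t)
        + 3/2 * (3 * (y t)^2 * y' t * z t + (y t)^3 * z' t)
        + 3/2 * (y' t * (z t)^3 + y t * (3 * (z t)^2 * z' t)) = V' t"
    proof -
      have e1: "y'' t = - 3 * y t - 3/2 * (y t)^3 - 9/2 * y t * (z t)^2" using ode_y[of t] by simp
      have e2: "z'' t = - 9 * z t - 9/2 * (z t)^3 - 27/2 * z t * (y t)^2" using ode_z[of t] by simp
      show ?thesis unfolding V'_def e1 e2 by (simp add: algebra_simps power2_eq_square power3_eq_cube)
    qed
    ultimately show ?thesis by simp
  qed
  obtain \<xi> where xi: "\<xi> > t1" "\<xi> < t2" "V t2 - V t1 = (t2 - t1) * V' \<xi>"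
    using MVT2[OF t12, of V V'] dV by blast
  have "V' \<xi> * (a * b) < 0"
  proof -
    have "y' \<xi> * a > 0" "z \<xi> * b > 0" using ya zb xi by auto
    then have "(y' \<xi> * a) * (z \<xi> * b) > 0" by simp
    moreover have "6 + 9 * (y \<xi>)^2 + 3 * (z \<xi>)^2 > 0" using zero_le_power2[of "y \<xi>"] zero_le_power2[of "z \<xi>"] by linarith
    ultimately have "(y' \<xi> * a) * (z \<xi> * b) * (6 + 9 * (y \<xi>)^2 + 3 * (z \<xi>)^2) > 0" by simp
    then show ?thesis unfolding V'_def by (simp add: algebra_simps)
  qed
  then have lt: "(V t2 - V t1) * (a * b) < 0"
    using xi t12 by (simp add: mult.assoc mult_pos_neg)
  have Vend: "V t = z t * y t * (3 + 3/2 * (y t)^2 + 3/2 * (z t)^2)" if "y' t = 0" for t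
    unfolding V_def using that by (simp add: algebra_simps power2_eq_square power3_eq_cube)
  have Q: "(3 + 3/2 * (y t)^2 + 3/2 * (z t)^2) > 0" for t using zero_le_power2[of "y t"] zero_le_power2[of "z t"] by linarith
  have "V t2 * (a * b) = (a * y t2) * (z t2 * b) * (3 + 3/2 * (y t2)^2 + 3/2 * (z t2)^2)"
    using Vend[OF crit2] by (simp add: algebra_simps)
  also have "\<dots> \<ge> 0" using ay2 zb2 Q[of t2] by simp
  finally have v2: "V t2 * (a * b) \<ge> 0" .
  have "V t1 * (a * b) = (a * y t1) * (z t1 * b) * (3 + 3/2 * (y t1)^2 + 3/2 * (z t1)^2)"
    using Vend[OF crit1] by (simp add: algebra_simps)
  also have "\<dots> \<le> 0" using ay1 zb1 Q[of t1]
    by (simp add: mult_nonpos_nonneg)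
  finally have v1: "V t1 * (a * b) \<le> 0" .
  show False using lt v1 v2 by (simp add: left_diff_distrib)
qed

end
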